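(* Let $U$ and $V$ be unitary matrices of sizes $N\times N$ and $M\times M$, with no zero entries, and let $F\in\mathbb C^{N\times N}$, $G\in\mathbb C^{M\times M}$ be arbitrary. Then (a) $\mathcal C_{U\otimes V}(F\otimes G)=\mathcal C_U(F)\otimes\mathcal C_V(G)$; (b) $\mathcal D_{U\otimes V}(F\otimes G)=\mathcal D_U(F)\otimes\mathcal D_V(G)$; (c) $\mathcal I_{U\otimes V}(F\otimes G)=\mathcal I_U(F)\otimes\mathcal I_V(G)$. That is, $\mathcal C_{U\otimes V}=\mathcal C_U\otimes\mathcal C_V$, $\mathcal D_{U\otimes V}=\mathcal D_U\otimes\mathcal D_V$, $\mathcal I_{U\otimes V}=\mathcal I_U\otimes\mathcal I_V$ (tensor products of operators taken with respect to the Kronecker product on arguments and results). The same holds for Kronecker products of more than two such unitary matrices.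
   Context: $\otimes$ is the Kronecker product, $\circ$ the entrywise product. For a unitary $W$ with no zero entries, $\mathcal C_W(F)=(F\circ W)W^*$, $\mathcal D_W(F)=W(\overline F\circ W)^*$ (both invertible linear operators on square matrices of the size of $W$), and $\mathcal I_W=\mathcal C_W^{-1}\mathcal D_W$. *)

theory Defs
  imports "Jordan_Normal_Form.Schur_Decomposition"
begin

definition kron :: "complex mat \<Rightarrow> complex mat \<Rightarrow> complex mat" where
  "kron A B = mat (dim_row A * dim_row B) (dim_col A * dim_col B)
     (\<lambda>(i,j). A $$ (i div dim_row B, j div dim_col B) * B $$ (i mod dim_row B, j mod dim_col B))"

definition kron_list :: "complex mat list \<Rightarrow> complex mat" where
  "kron_list As = foldr kron As (1\<^sub>m 1)"

definition hadamard :: "complex mat \<Rightarrow> complex mat \<Rightarrow> complex mat" where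
  "hadamard A B = mat (dim_row A) (dim_col A) (\<lambda>(i,j). A $$ (i,j) * B $$ (i,j))"

definition unitary_mat :: "nat \<Rightarrow> complex mat \<Rightarrow> bool" where
  "unitary_mat n W \<longleftrightarrow> W \<in> carrier_mat n n \<and> W * mat_adjoint W = 1\<^sub>m n \<and> mat_adjoint W * W = 1\<^sub>m n"

definition no_zero_entries :: "complex mat \<Rightarrow> bool" where
  "no_zero_entries W \<longleftrightarrow> (\<forall>i<dim_row W. \<forall>j<dim_col W. W $$ (i,j) \<noteq> 0)"

definition opC :: "complex mat \<Rightarrow> complex mat \<Rightarrow> complex mat" where
  "opC W F = hadamard F W * mat_adjoint W"

definition opD :: "complex mat \<Rightarrow> complex mat \<Rightarrow> complex mat" where
  "opD W F = W * mat_adjoint (hadamard (map_mat cnj F) W)"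

text \<open>I_W = C_W^{-1} D_W, with C_W^{-1} the inverse of C_W on square matrices of the size of W.\<close>
definition opI :: "complex mat \<Rightarrow> complex mat \<Rightarrow> complex mat" where
  "opI W F = (THE X. X \<in> carrier_mat (dim_row W) (dim_row W) \<and> opC W X = opD W F)"

end

theory Submission
  imports Defs
begin

lemma adj_dims[simp]: "dim_row (mat_adjoint A) = dim_col A" "dim_col (mat_adjoint A) = dim_row A"
  unfolding mat_adjoint_def by auto

lemma adj_entry[simp]: "i < dim_col A \<Longrightarrow> j < dim_row A \<Longrightarrow> mat_adjoint A $$ (i,j) = cnj (A $$ (j,i))"
  unfolding mat_adjoint_def by (simp add: mat_of_rows_def)

lemma kron_dims[simp]: "dim_row (kron A B) = dim_row A * dim_row B" "dim_col (kron A B) = dim_col A * dim_col B"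
  unfolding kron_def by auto

lemma kron_entry[simp]: "i < dim_row A * dim_row B \<Longrightarrow> j < dim_col A * dim_col B \<Longrightarrow>
   kron A B $$ (i,j) = A $$ (i div dim_row B, j div dim_col B) * B $$ (i mod dim_row B, j mod dim_col B)"
  unfolding kron_def by auto

lemma had_dims[simp]: "dim_row (hadamard A B) = dim_row A" "dim_col (hadamard A B) = dim_col A"
  unfolding hadamard_def by auto

lemma had_entry[simp]: "i < dim_row A \<Longrightarrow> j < dim_col A \<Longrightarrow> hadamard A B $$ (i,j) = A $$ (i,j) * B $$ (i,j)"
  unfolding hadamard_def by auto

lemma sum_split_mult: "(\<Sum>r<k*l. f r) = (\<Sum>a<k. \<Sum>b<l. f (a*l+b :: nat))"
proof (induction k)
  case 0 then show ?case by simp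
next
  case (Suc k)
  have "{..<Suc k * l} = {..<k*l} \<union> {k*l..<k*l+l}" by auto
  then have "(\<Sum>r<Suc k*l. f r) = (\<Sum>r<k*l. f r) + (\<Sum>r\<in>{k*l..<k*l+l}. f r)"
    by (simp add: sum.union_disjoint ivl_disj_int)
  also have "(\<Sum>r\<in>{k*l..<k*l+l}. f r) = (\<Sum>b<l. f (k*l+b))"
    using sum.shift_bounds_nat_ivl[of f 0 "k*l" l] by (simp add: lessThan_atLeast0 add.commute)
  finally show ?case using Suc by simp
qed

lemma divmod_bounds: "(i::nat) < n*m \<Longrightarrow> i div m < n \<and> i mod m < m"
  by (metis less_mult_imp_div_less mod_less_divisor mult.commute mult_0_right not_gr0 not_less_zero)

lemma idx_bound: assumes "(a::nat) < k" "b < l" shows "a*l+b < k*l"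
proof -
  have "a*l+b < a*l+l" using assms(2) by simp
  also have "a*l + l = Suc a * l" by simp
  also have "\<dots> \<le> k*l" using assms(1) by (intro mult_le_mono1) simp
  finally show ?thesis .
qed

lemma kron_mult:
  assumes "A \<in> carrier_mat n k" "C \<in> carrier_mat k p" "B \<in> carrier_mat m l" "D \<in> carrier_mat l q"
  shows "kron A B * kron C D = kron (A*C) (B*D)"
proof (rule eq_matI)
  fix i j assume i: "i < dim_row (kron (A*C) (B*D))" and j: "j < dim_col (kron (A*C) (B*D))"
  have dA: "dim_row A = n" "dim_col A = k" and dC: "dim_row C = k" "dim_col C = p"
    and dB: "dim_row B = m" "dim_col B = l" and dD: "dim_row D = l" "dim_col D = q" using assms by auto
  have im: "i < n*m" using i dA dB by simp
  have jq: "j < p*q" using j dC dD by simp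
  note id = divmod_bounds[OF im] and jd = divmod_bounds[OF jq]
  have "(kron A B * kron C D) $$ (i,j) = (\<Sum>r\<in>{0..<k*l}. kron A B $$ (i,r) * kron C D $$ (r,j))"
    using im jq dA dB dC dD by (simp add: scalar_prod_def)
  also have "\<dots> = (\<Sum>a<k. \<Sum>b<l. kron A B $$ (i,a*l+b) * kron C D $$ (a*l+b,j))"
    unfolding atLeast0LessThan by (rule sum_split_mult)
  also have "\<dots> = (\<Sum>a<k. \<Sum>b<l. (A $$ (i div m, a) * C $$ (a, j div q)) * (B $$ (i mod m, b) * D $$ (b, j mod q)))"
  proof (intro sum.cong refl)
    fix a b assume a: "a \<in> {..<k}" and b: "b \<in> {..<l}"
    have r: "a*l+b < k*l" using a b idx_bound by simp
    have dv: "(a*l+b) div l = a" "(a*l+b) mod l = b" using b by auto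
    have "kron A B $$ (i,a*l+b) = A $$ (i div m, a) * B $$ (i mod m, b)"
      using kron_entry[of i A B "a*l+b"] im r dA dB dv by simp
    moreover have "kron C D $$ (a*l+b,j) = C $$ (a, j div q) * D $$ (b, j mod q)"
      using kron_entry[of "a*l+b" C D j] jq r dC dD dv by simp
    ultimately show "kron A B $$ (i,a*l+b) * kron C D $$ (a*l+b,j) =
      (A $$ (i div m, a) * C $$ (a, j div q)) * (B $$ (i mod m, b) * D $$ (b, j mod q))"
      by (simp add: ac_simps)
  qed
  also have "\<dots> = (\<Sum>a<k. A $$ (i div m, a) * C $$ (a, j div q)) * (\<Sum>b<l. B $$ (i mod m, b) * D $$ (b, j mod q))"
    by (simp add: sum_product)
  also have "\<dots> = kron (A*C) (B*D) $$ (i,j)"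
  proof -
    have "(A*C) $$ (i div m, j div q) = (\<Sum>a<k. A $$ (i div m, a) * C $$ (a, j div q))"
      using id jd dA dC by (simp add: scalar_prod_def atLeast0LessThan)
    moreover have "(B*D) $$ (i mod m, j mod q) = (\<Sum>b<l. B $$ (i mod m, b) * D $$ (b, j mod q))"
      using id jd dB dD by (simp add: scalar_prod_def atLeast0LessThan)
    moreover have "kron (A*C) (B*D) $$ (i,j) = (A*C) $$ (i div m, j div q) * (B*D) $$ (i mod m, j mod q)"
      using kron_entry[of i "A*C" "B*D" j] im jq dA dB dC dD by simp
    ultimately show ?thesis by simp
  qed
  finally show "(kron A B * kron C D) $$ (i,j) = kron (A*C) (B*D) $$ (i,j)" .
qed (use assms in auto)

lemma kron_carrier[simp]: "A \<in> carrier_mat n k \<Longrightarrow> B \<in> carrier_mat m l \<Longrightarrow> kron A B \<in> carrier_mat (n*m) (k*l)"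
  by auto

lemma kron_adj: "mat_adjoint (kron A B) = kron (mat_adjoint A) (mat_adjoint B)"
  by (rule eq_matI) (auto simp: divmod_bounds)

lemma kron_had: "dim_row F = dim_row U \<Longrightarrow> dim_col F = dim_col U \<Longrightarrow> dim_row G = dim_row V \<Longrightarrow> dim_col G = dim_col V \<Longrightarrow>
  hadamard (kron F G) (kron U V) = kron (hadamard F U) (hadamard G V)"
  by (rule eq_matI) (auto simp: divmod_bounds)

lemma kron_cnj: "map_mat cnj (kron F G) = kron (map_mat cnj F) (map_mat cnj G)"
  by (rule eq_matI) (auto simp: divmod_bounds)

lemma kron_one: "kron (1\<^sub>m n) (1\<^sub>m m) = 1\<^sub>m (n*m)"
proof (rule eq_matI)
  fix i j assume "i < dim_row (1\<^sub>m (n*m))" "j < dim_col (1\<^sub>m (n*m))"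
  then have i: "i < n*m" and j: "j < n*m" by auto
  have "(i div m = j div m \<and> i mod m = j mod m) = (i = j)"
    by (metis div_mult_mod_eq)
  then show "kron (1\<^sub>m n) (1\<^sub>m m) $$ (i,j) = 1\<^sub>m (n*m) $$ (i,j)"
    using i j divmod_bounds[OF i] divmod_bounds[OF j] by auto
qed auto

lemma kron_one_right: "kron A (1\<^sub>m 1) = A"
  by (rule eq_matI) auto

lemma adj_carrier[simp]: "A \<in> carrier_mat n m \<Longrightarrow> mat_adjoint A \<in> carrier_mat m n"
  by auto

lemma unitary_kron: assumes "unitary_mat N U" "unitary_mat M V" shows "unitary_mat (N*M) (kron U V)"
proof -
  have U: "U \<in> carrier_mat N N" "U * mat_adjoint U = 1\<^sub>m N" "mat_adjoint U * U = 1\<^sub>m N"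
    and V: "V \<in> carrier_mat M M" "V * mat_adjoint V = 1\<^sub>m M" "mat_adjoint V * V = 1\<^sub>m M"
    using assms unfolding unitary_mat_def by auto
  have 1: "kron U V * kron (mat_adjoint U) (mat_adjoint V) = kron (U * mat_adjoint U) (V * mat_adjoint V)"
    by (rule kron_mult[of _ N N _ N _ M M _ M]) (use U V in auto)
  have 2: "kron (mat_adjoint U) (mat_adjoint V) * kron U V = kron (mat_adjoint U * U) (mat_adjoint V * V)"
    by (rule kron_mult[of _ N N _ N _ M M _ M]) (use U V in auto)
  show ?thesis unfolding unitary_mat_def kron_adj 1 2 using U V by (simp add: kron_one)
qed

lemma nz_kron: "no_zero_entries U \<Longrightarrow> no_zero_entries V \<Longrightarrow> no_zero_entries (kron U V)"
  unfolding no_zero_entries_def by (auto simp: divmod_bounds)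

lemma opC_carrier: "unitary_mat N W \<Longrightarrow> X \<in> carrier_mat N N \<Longrightarrow> opC W X \<in> carrier_mat N N"
  unfolding opC_def unitary_mat_def by auto

lemma opD_carrier: "unitary_mat N W \<Longrightarrow> X \<in> carrier_mat N N \<Longrightarrow> opD W X \<in> carrier_mat N N"
  unfolding opD_def unitary_mat_def by auto

lemma opC_kron: assumes "unitary_mat N U" "unitary_mat M V" "F \<in> carrier_mat N N" "G \<in> carrier_mat M M"
  shows "opC (kron U V) (kron F G) = kron (opC U F) (opC V G)"
proof -
  have U: "U \<in> carrier_mat N N" and V: "V \<in> carrier_mat M M" using assms unfolding unitary_mat_def by auto
  have "opC (kron U V) (kron F G) = kron (hadamard F U) (hadamard G V) * kron (mat_adjoint U) (mat_adjoint V)"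
    unfolding opC_def using U V assms by (simp add: kron_had kron_adj)
  also have "\<dots> = kron (opC U F) (opC V G)" unfolding opC_def
    by (rule kron_mult[of _ N N _ N _ M M _ M]) (use U V assms in auto)
  finally show ?thesis .
qed

lemma opD_kron: assumes "unitary_mat N U" "unitary_mat M V" "F \<in> carrier_mat N N" "G \<in> carrier_mat M M"
  shows "opD (kron U V) (kron F G) = kron (opD U F) (opD V G)"
proof -
  have U: "U \<in> carrier_mat N N" and V: "V \<in> carrier_mat M M" using assms unfolding unitary_mat_def by auto
  have "opD (kron U V) (kron F G) = kron U V * kron (mat_adjoint (hadamard (map_mat cnj F) U)) (mat_adjoint (hadamard (map_mat cnj G) V))"
    unfolding opD_def using U V assms by (simp add: kron_had kron_adj kron_cnj)
  also have "\<dots> = kron (opD U F) (opD V G)" unfolding opD_def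
    by (rule kron_mult[of _ N N _ N _ M M _ M]) (use U V assms in auto)
  finally show ?thesis .
qed

lemma opC_inj: assumes "unitary_mat N W" "no_zero_entries W" "X \<in> carrier_mat N N" "Y \<in> carrier_mat N N"
  "opC W X = opC W Y" shows "X = Y"
proof -
  have W: "W \<in> carrier_mat N N" "mat_adjoint W * W = 1\<^sub>m N" using assms(1) unfolding unitary_mat_def by auto
  have "hadamard X W * mat_adjoint W * W = hadamard Y W * mat_adjoint W * W"
    using assms(5) unfolding opC_def by simp
  moreover have "\<And>Z. Z \<in> carrier_mat N N \<Longrightarrow> hadamard Z W * mat_adjoint W * W = hadamard Z W"
  proof -
    fix Z :: "complex mat" assume Z: "Z \<in> carrier_mat N N"
    have hz: "hadamard Z W \<in> carrier_mat N N" using Z by auto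
    have "hadamard Z W * mat_adjoint W * W = hadamard Z W * (mat_adjoint W * W)"
      by (rule assoc_mult_mat[of _ N N _ N _ N]) (use hz W in auto)
    then show "hadamard Z W * mat_adjoint W * W = hadamard Z W" using W hz right_mult_one_mat[OF hz] by simp
  qed
  ultimately have h: "hadamard X W = hadamard Y W" using assms(3,4) by metis
  show ?thesis
  proof (rule eq_matI)
    fix i j assume "i < dim_row Y" "j < dim_col Y"
    then have ij: "i < N" "j < N" using assms(4) by auto
    have "X $$ (i,j) * W $$ (i,j) = Y $$ (i,j) * W $$ (i,j)"
      using arg_cong[OF h, of "\<lambda>A. A $$ (i,j)"] ij assms(3,4) by simp
    moreover have "W $$ (i,j) \<noteq> 0" using assms(2) W ij unfolding no_zero_entries_def by auto
    ultimately show "X $$ (i,j) = Y $$ (i,j)" by simp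
  qed (use assms in auto)
qed

lemma opC_surj: assumes "unitary_mat N W" "no_zero_entries W" "Z \<in> carrier_mat N N"
  shows "\<exists>X \<in> carrier_mat N N. opC W X = Z"
proof -
  have W: "W \<in> carrier_mat N N" "W * mat_adjoint W = 1\<^sub>m N" using assms(1) unfolding unitary_mat_def by auto
  define X where "X = mat N N (\<lambda>(i,j). (Z * W) $$ (i,j) / W $$ (i,j))"
  have "hadamard X W = Z * W"
  proof (rule eq_matI)
    fix i j assume "i < dim_row (Z*W)" "j < dim_col (Z*W)"
    then have ij: "i < N" "j < N" using assms W by auto
    have "W $$ (i,j) \<noteq> 0" using assms(2) W ij unfolding no_zero_entries_def by auto
    then show "hadamard X W $$ (i,j) = (Z*W) $$ (i,j)" using ij W unfolding X_def by simp
  qed (use assms W X_def in auto)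
  then have "opC W X = Z * W * mat_adjoint W" unfolding opC_def by simp
  also have "\<dots> = Z * (W * mat_adjoint W)"
    by (rule assoc_mult_mat[of _ N N _ N _ N]) (use W assms(3) in auto)
  also have "\<dots> = Z" using W assms(3) by simp
  finally show ?thesis unfolding X_def by auto
qed

lemma opI_char: assumes "unitary_mat N W" "no_zero_entries W" "F \<in> carrier_mat N N"
  "X \<in> carrier_mat N N" "opC W X = opD W F" shows "opI W F = X"
proof -
  have dr: "dim_row W = N" using assms(1) unfolding unitary_mat_def by auto
  show ?thesis unfolding opI_def dr
    by (rule the_equality) (use assms opC_inj[OF assms(1,2)] in auto)
qed

lemma opI_props: assumes "unitary_mat N W" "no_zero_entries W" "F \<in> carrier_mat N N"
  shows "opI W F \<in> carrier_mat N N \<and> opC W (opI W F) = opD W F"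
proof -
  obtain X where X: "X \<in> carrier_mat N N" "opC W X = opD W F"
    using opC_surj[OF assms(1,2) opD_carrier[OF assms(1,3)]] by blast
  show ?thesis using opI_char[OF assms X] X by simp
qed

lemma opI_kron: assumes "unitary_mat N U" "no_zero_entries U" "unitary_mat M V" "no_zero_entries V"
  "F \<in> carrier_mat N N" "G \<in> carrier_mat M M"
  shows "opI (kron U V) (kron F G) = kron (opI U F) (opI V G)"
proof -
  note pU = opI_props[OF assms(1,2,5)] and pV = opI_props[OF assms(3,4,6)]
  show ?thesis
    apply (rule opI_char[OF unitary_kron[OF assms(1,3)] nz_kron[OF assms(2,4)]])
    using assms pU pV by (auto simp: opC_kron opD_kron)
qed

lemma list_case: "length Us = length ns \<Longrightarrow> length Fs = length ns \<Longrightarrow>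
    (\<forall>k<length ns. unitary_mat (ns!k) (Us!k) \<and> no_zero_entries (Us!k)
                          \<and> Fs!k \<in> carrier_mat (ns!k) (ns!k)) \<Longrightarrow>
    unitary_mat (prod_list ns) (kron_list Us) \<and> no_zero_entries (kron_list Us) \<and>
    kron_list Fs \<in> carrier_mat (prod_list ns) (prod_list ns) \<and>
           opC (kron_list Us) (kron_list Fs) = kron_list (map2 opC Us Fs) \<and>
           opD (kron_list Us) (kron_list Fs) = kron_list (map2 opD Us Fs) \<and>
           opI (kron_list Us) (kron_list Fs) = kron_list (map2 opI Us Fs)"
proof (induction ns arbitrary: Us Fs)
  case Nil
  then have e: "Us = []" "Fs = []" by auto
  have u: "unitary_mat 1 (1\<^sub>m 1)" unfolding unitary_mat_def
    by (auto simp: mat_eq_iff)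
  have nz: "no_zero_entries (1\<^sub>m 1)" unfolding no_zero_entries_def by auto
  have c: "opC (1\<^sub>m 1) (1\<^sub>m 1) = 1\<^sub>m 1" unfolding opC_def by (auto simp: mat_eq_iff scalar_prod_def)
  have d: "opD (1\<^sub>m 1) (1\<^sub>m 1) = 1\<^sub>m 1" unfolding opD_def by (auto simp: mat_eq_iff scalar_prod_def)
  have i: "opI (1\<^sub>m 1) (1\<^sub>m 1) = 1\<^sub>m 1"
  proof (rule opI_char[OF u nz])
    show "opC (1\<^sub>m 1) (1\<^sub>m 1) = opD (1\<^sub>m 1) (1\<^sub>m 1)" unfolding c d ..
  qed auto
  show ?case using e u nz c d i by (simp add: kron_list_def)
next
  case (Cons n ns)
  then obtain U Us' F Fs' where e: "Us = U # Us'" "Fs = F # Fs'"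
    by (metis length_Suc_conv)
  have h0: "unitary_mat n U" "no_zero_entries U" "F \<in> carrier_mat n n"
    using Cons.prems(3)[rule_format, of 0] e by simp_all
  have hs: "\<forall>k<length ns. unitary_mat (ns!k) (Us'!k) \<and> no_zero_entries (Us'!k) \<and> Fs'!k \<in> carrier_mat (ns!k) (ns!k)"
  proof (intro allI impI)
    fix k assume "k < length ns"
    then show "unitary_mat (ns!k) (Us'!k) \<and> no_zero_entries (Us'!k) \<and> Fs'!k \<in> carrier_mat (ns!k) (ns!k)"
      using Cons.prems(3)[rule_format, of "Suc k"] e by simp
  qed
  have l1: "length Us' = length ns" and l2: "length Fs' = length ns" using Cons.prems(1,2) e by simp_all
  note IH' = Cons.IH[OF l1 l2 hs]
  have kl: "\<And>A As. kron_list (A # As) = kron A (kron_list As)" by (simp add: kron_list_def)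
  have uI: "unitary_mat (prod_list ns) (kron_list Us')" and nI: "no_zero_entries (kron_list Us')"
    and cI: "kron_list Fs' \<in> carrier_mat (prod_list ns) (prod_list ns)" using IH' by blast+
  have eC: "opC (kron_list Us') (kron_list Fs') = kron_list (map2 opC Us' Fs')"
    and eD: "opD (kron_list Us') (kron_list Fs') = kron_list (map2 opD Us' Fs')"
    and eI: "opI (kron_list Us') (kron_list Fs') = kron_list (map2 opI Us' Fs')" using IH' by blast+
  have m2: "map2 f (U # Us') (F # Fs') = f U F # map2 f Us' Fs'" for f :: "complex mat \<Rightarrow> complex mat \<Rightarrow> complex mat"
    by simp
  have pl: "prod_list (n # ns) = n * prod_list ns" by simp
  show ?case unfolding e kl m2 pl
  proof (intro conjI)
    show "unitary_mat (n * prod_list ns) (kron U (kron_list Us'))" by (rule unitary_kron[OF h0(1) uI])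
    show "no_zero_entries (kron U (kron_list Us'))" by (rule nz_kron[OF h0(2) nI])
    show "kron F (kron_list Fs') \<in> carrier_mat (n * prod_list ns) (n * prod_list ns)"
      by (rule kron_carrier[OF h0(3) cI])
    show "opC (kron U (kron_list Us')) (kron F (kron_list Fs')) = kron (opC U F) (kron_list (map2 opC Us' Fs'))"
      using opC_kron[OF h0(1) uI h0(3) cI] eC by (simp only:)
    show "opD (kron U (kron_list Us')) (kron F (kron_list Fs')) = kron (opD U F) (kron_list (map2 opD Us' Fs'))"
      using opD_kron[OF h0(1) uI h0(3) cI] eD by (simp only:)
    show "opI (kron U (kron_list Us')) (kron F (kron_list Fs')) = kron (opI U F) (kron_list (map2 opI Us' Fs'))"
      using opI_kron[OF h0(1,2) uI nI h0(3) cI] eI by (simp only:)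
  qed
qed

theorem lemma3p12:
  fixes U V F G :: "complex mat" and N M :: nat
  assumes "unitary_mat N U" and "no_zero_entries U"
      and "unitary_mat M V" and "no_zero_entries V"
      and "F \<in> carrier_mat N N" and "G \<in> carrier_mat M M"
  shows "opC (kron U V) (kron F G) = kron (opC U F) (opC V G)
       \<and> opD (kron U V) (kron F G) = kron (opD U F) (opD V G)
       \<and> opI (kron U V) (kron F G) = kron (opI U F) (opI V G)
       \<and> (\<forall>Us Fs ns. length Us = length ns \<longrightarrow> length Fs = length ns \<longrightarrow> length ns \<ge> 2 \<longrightarrow>
           (\<forall>k<length ns. unitary_mat (ns!k) (Us!k) \<and> no_zero_entries (Us!k)
                          \<and> Fs!k \<in> carrier_mat (ns!k) (ns!k)) \<longrightarrow>
           opC (kron_list Us) (kron_list Fs) = kron_list (map2 opC Us Fs) \<and>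
           opD (kron_list Us) (kron_list Fs) = kron_list (map2 opD Us Fs) \<and>
           opI (kron_list Us) (kron_list Fs) = kron_list (map2 opI Us Fs))"
proof (intro conjI allI impI)
  show "opC (kron U V) (kron F G) = kron (opC U F) (opC V G)" using assms by (simp add: opC_kron)
  show "opD (kron U V) (kron F G) = kron (opD U F) (opD V G)" using assms by (simp add: opD_kron)
  show "opI (kron U V) (kron F G) = kron (opI U F) (opI V G)" using assms by (simp add: opI_kron)
next
  fix Us Fs :: "complex mat list" and ns :: "nat list"
  assume a: "length Us = length ns" "length Fs = length ns" "2 \<le> length ns"
    "\<forall>k<length ns. unitary_mat (ns!k) (Us!k) \<and> no_zero_entries (Us!k) \<and> Fs!k \<in> carrier_mat (ns!k) (ns!k)"
  note L = list_case[OF a(1,2,4)]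
  show "opC (kron_list Us) (kron_list Fs) = kron_list (map2 opC Us Fs)" using L by blast
  show "opD (kron_list Us) (kron_list Fs) = kron_list (map2 opD Us Fs)" using L by blast
  show "opI (kron_list Us) (kron_list Fs) = kron_list (map2 opI Us Fs)" using L by blast
qed

end
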